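(* Let $K$ be the $2$-uniform tiling of the plane whose vertex types are $[3^6]$ and $[3^2,6^2]$. If $X$ is a map on the torus that is a quotient $X=K/\Gamma$ of $K$, then the vertices of $X$ form at most $4$ orbits under ${\rm Aut}(X)$.
   Context: A map is a polyhedral map: a cellular embedding of a connected graph in a closed surface such that the intersection of any two distinct faces is empty, a single vertex, or a single edge. For a vertex $u$, the faces containing $u$ form a cyclic sequence (the face-cycle at $u$); if this cyclic sequence consists of consecutive blocks of $n_1$ $p_1$-gons, then $n_2$ $p_2$-gons, ..., then $n_k$ $p_k$-gons, with cyclically consecutive $p_i$ distinct, then $u$ is said to have type $[p_1^{n_1},\dots,p_k^{n_k}]$ (defined up to cyclic shift and reversal). A $2$-uniform tiling is an edge-to-edge tiling of the Euclidean plane $\mathbb{R}^2$ by regular polygons whose symmetry group has exactly two orbits on the set of vertices; viewed as a map on the plane, its vertices have (at most) two types, listed as $[W;Z]$. (Up to isomorphism there are exactly $20$ such tilings; there is exactly one with the vertex types named in the claim.) For a map $K$ on the plane, a quotient of $K$ on the torus is a map $X$ on the torus together with a polyhedral covering map $\eta:K\to X$ with $X=K/\Gamma$, where $\Gamma\le {\rm Aut}(K)$ is a subgroup acting without fixed vertices, edges or faces and $K/\Gamma$ is homeomorphic to the torus. ${\rm Aut}(X)$ denotes the automorphism group of the map $X$, acting on its vertex set $V(X)$. *)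

theory Defs
  imports Main
begin

text \<open>Points of the triangular lattice: (i,j) stands for i*e1 + j*e2 with
  e1 = (1,0), e2 = (1/2, sqrt 3/2). This basis is positively oriented.\<close>

type_synonym pt = "int \<times> int"

definition padd :: "pt \<Rightarrow> pt \<Rightarrow> pt" where
  "padd p q = (fst p + fst q, snd p + snd q)"

definition unit_vecs :: "pt set" where
  "unit_vecs = {(1,0), (0,1), (-1,1), (-1,0), (0,-1), (1,-1)}"

text \<open>The 2-uniform tiling K = [3^6; 3^2.6^2]: delete from the triangular lattice the
  lattice points (i,j) with i = j = 0 or i = j = 1 (mod 3) (these are the centres of the
  hexagons, which form a honeycomb of edge length sqrt 3); the six triangles around each
  deleted point are merged into a hexagon. The points with i = j = 2 (mod 3) are the
  vertices of type [3^6], all other vertices have type [3^2,6^2].\<close>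

definition hex_centre :: "pt \<Rightarrow> bool" where
  "hex_centre p \<longleftrightarrow> fst p mod 3 = snd p mod 3 \<and> fst p mod 3 \<noteq> 2"

definition VK :: "pt set" where
  "VK = {p. \<not> hex_centre p}"

definition up_tri :: "pt \<Rightarrow> pt set" where
  "up_tri p = {p, padd p (1,0), padd p (0,1)}"

definition down_tri :: "pt \<Rightarrow> pt set" where
  "down_tri p = {padd p (1,0), padd p (0,1), padd p (1,1)}"

definition hexagon :: "pt \<Rightarrow> pt set" where
  "hexagon c = (padd c) ` unit_vecs"

definition FK :: "pt set set" where
  "FK = {up_tri p | p. up_tri p \<subseteq> VK} \<union> {down_tri p | p. down_tri p \<subseteq> VK}
        \<union> {hexagon c | c. hex_centre c}"

definition EK :: "pt set set" where
  "EK = {{p, q} | p q. p \<in> VK \<and> q \<in> VK \<and> (fst q - fst p, snd q - snd p) \<in> unit_vecs}"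

definition AutK :: "(pt \<Rightarrow> pt) set" where
  "AutK = {f. bij_betw f VK VK \<and> (\<forall>v. v \<notin> VK \<longrightarrow> f v = v) \<and>
              (\<forall>F. F \<subseteq> VK \<longrightarrow> (F \<in> FK \<longleftrightarrow> f ` F \<in> FK))}"

definition orient :: "pt \<Rightarrow> pt \<Rightarrow> pt \<Rightarrow> int" where
  "orient a b c = (fst b - fst a) * (snd c - snd a) - (snd b - snd a) * (fst c - fst a)"

definition orientation_preserving :: "(pt \<Rightarrow> pt) \<Rightarrow> bool" where
  "orientation_preserving f \<longleftrightarrow>
     (\<forall>p. up_tri p \<subseteq> VK \<longrightarrow> orient (f p) (f (padd p (1,0))) (f (padd p (0,1))) > 0)"

definition subgroup_AutK :: "(pt \<Rightarrow> pt) set \<Rightarrow> bool" where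
  "subgroup_AutK G \<longleftrightarrow> G \<subseteq> AutK \<and> id \<in> G \<and> (\<forall>g\<in>G. \<forall>h\<in>G. g \<circ> h \<in> G)
      \<and> (\<forall>g\<in>G. \<exists>h\<in>G. h \<circ> g = id)"

definition acts_freely :: "(pt \<Rightarrow> pt) set \<Rightarrow> bool" where
  "acts_freely G \<longleftrightarrow> (\<forall>g\<in>G. g \<noteq> id \<longrightarrow>
      (\<forall>v\<in>VK. g v \<noteq> v) \<and> (\<forall>e\<in>EK. g ` e \<noteq> e) \<and> (\<forall>F\<in>FK. g ` F \<noteq> F))"

text \<open>Quotient map eta : K -> K/G on vertices (a vertex of X is a G-orbit).\<close>
definition eta :: "(pt \<Rightarrow> pt) set \<Rightarrow> pt \<Rightarrow> pt set" where
  "eta G v = (\<lambda>g. g v) ` G"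

definition VertX :: "(pt \<Rightarrow> pt) set \<Rightarrow> pt set set" where
  "VertX G = eta G ` VK"

definition FaceX :: "(pt \<Rightarrow> pt) set \<Rightarrow> pt set set set" where
  "FaceX G = (\<lambda>F. eta G ` F) ` FK"

definition EdgX :: "(pt \<Rightarrow> pt) set \<Rightarrow> pt set set set" where
  "EdgX G = (\<lambda>e. eta G ` e) ` EK"

text \<open>K/G is homeomorphic to the torus: G acts freely, cocompactly (finitely many vertex
  orbits) and preserving orientation (free + cocompact gives a closed surface covered by
  the plane, i.e. torus or Klein bottle; orientation preserving singles out the torus).\<close>
definition torus_quotient :: "(pt \<Rightarrow> pt) set \<Rightarrow> bool" where
  "torus_quotient G \<longleftrightarrow> subgroup_AutK G \<and> acts_freely G \<and> finite (VertX G)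
      \<and> (\<forall>g\<in>G. orientation_preserving g)"

definition polyhedral_quotient :: "(pt \<Rightarrow> pt) set \<Rightarrow> bool" where
  "polyhedral_quotient G \<longleftrightarrow>
     (\<forall>F\<in>FK. inj_on (eta G) F)
   \<and> (\<forall>F\<in>FK. \<forall>F'\<in>FK. eta G ` F = eta G ` F' \<longrightarrow> (\<exists>g\<in>G. g ` F = F'))
   \<and> (\<forall>e\<in>EK. \<forall>e'\<in>EK. eta G ` e = eta G ` e' \<longrightarrow> (\<exists>g\<in>G. g ` e = e'))
   \<and> (\<forall>A\<in>FaceX G. \<forall>B\<in>FaceX G. A \<noteq> B \<longrightarrow>
         A \<inter> B = {} \<or> card (A \<inter> B) = 1 \<or> A \<inter> B \<in> EdgX G)"

definition AutX :: "(pt \<Rightarrow> pt) set \<Rightarrow> (pt set \<Rightarrow> pt set) set" where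
  "AutX G = {a. bij_betw a (VertX G) (VertX G) \<and>
                (\<forall>A. A \<subseteq> VertX G \<longrightarrow> (A \<in> FaceX G \<longleftrightarrow> a ` A \<in> FaceX G))}"

definition AutX_orbits :: "(pt \<Rightarrow> pt) set \<Rightarrow> pt set set set" where
  "AutX_orbits G = {(\<lambda>a. a x) ` AutX G | x. x \<in> VertX G}"

end

theory Submission
  imports Defs "HOL-Library.Product_Plus"
begin

abbreviation U where "U \<equiv> unit_vecs"

definition SV :: "pt \<Rightarrow> bool" where "SV p \<longleftrightarrow> fst p mod 3 = 2 \<and> snd p mod 3 = 2"
definition rot1 :: "pt \<Rightarrow> pt" where "rot1 p = (- snd p, fst p + snd p)"
definition rot5 :: "pt \<Rightarrow> pt" where "rot5 p = (fst p + snd p, - fst p)"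
definition lin :: "pt \<Rightarrow> pt \<Rightarrow> pt" where
 "lin a p = (fst p * fst a - snd p * snd a, fst p * snd a + snd p * (fst a + snd a))"

lemma m3: "(i::int) mod 3 = 0 \<or> i mod 3 = 1 \<or> i mod 3 = 2" by presburger
lemma mp1: "((i::int) + 1) mod 3 = (if i mod 3 = 2 then 0 else i mod 3 + 1)" by presburger
lemma mm1: "((i::int) - 1) mod 3 = (if i mod 3 = 0 then 2 else i mod 3 - 1)" by presburger
lemma mp2: "((i::int) + 2) mod 3 = (if i mod 3 = 0 then 2 else i mod 3 - 1)" by presburger
lemma mm2: "((i::int) - 2) mod 3 = (if i mod 3 = 2 then 0 else i mod 3 + 1)" by presburger
lemma mp3: "((i::int) + 3) mod 3 = i mod 3" by presburger
lemma mm3: "((i::int) - 3) mod 3 = i mod 3" by presburger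
lemmas mrules = mp1 mm1 mp2 mm2 mp3 mm3

lemma padd_eq: "padd p q = p + q" by (simp add: padd_def plus_prod_def)

lemma U_iff: "u \<in> U \<longleftrightarrow> u = (1,0) \<or> u = (0,1) \<or> u = (-1,1) \<or> u = (-1,0) \<or> u = (0,-1) \<or> u = (1,-1)"
  by (auto simp: unit_vecs_def)

lemma U_neg: "u \<in> U \<Longrightarrow> - u \<in> U" unfolding U_iff by (elim disjE; simp)
lemma rot1_U: "u \<in> U \<Longrightarrow> rot1 u \<in> U" unfolding U_iff by (elim disjE; simp add: rot1_def)
lemma rot5_U: "u \<in> U \<Longrightarrow> rot5 u \<in> U" unfolding U_iff by (elim disjE; simp add: rot5_def)
lemma rot5_rot1[simp]: "rot5 (rot1 x) = x" by (simp add: rot1_def rot5_def)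
lemma rot1_rot5[simp]: "rot1 (rot5 x) = x" by (simp add: rot1_def rot5_def)
lemma lin_add: "lin a (p + q) = lin a p + lin a q"
  by (simp add: lin_def prod_eq_iff algebra_simps)
lemma lin_diff: "lin a (p - q) = lin a p - lin a q"
  by (simp add: lin_def prod_eq_iff algebra_simps)
lemma lin_neg: "lin a (- p) = - lin a p"
  by (simp add: lin_def prod_eq_iff algebra_simps)
lemma lin_rot1: "lin a (rot1 u) = rot1 (lin a u)"
  by (simp add: lin_def rot1_def prod_eq_iff algebra_simps)
lemma lin_rot5: "lin a (rot5 u) = rot5 (lin a u)"
  by (simp add: lin_def rot5_def prod_eq_iff algebra_simps)
lemma lin_comm: "lin a u = lin u a"
  by (simp add: lin_def prod_eq_iff algebra_simps)
lemma lin_U: "a \<in> U \<Longrightarrow> u \<in> U \<Longrightarrow> lin a u \<in> U"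
  unfolding U_iff by (elim disjE; simp add: lin_def)
lemma lin_e1[simp]: "lin a (1,0) = a" by (simp add: lin_def)
lemma lin_zero[simp]: "lin a 0 = 0" by (simp add: lin_def zero_prod_def)
definition ainv :: "pt \<Rightarrow> pt" where "ainv a = (fst a + snd a, - snd a)"
lemma lin_assoc: "lin a (lin b x) = lin (lin a b) x"
  by (simp add: lin_def prod_eq_iff algebra_simps)
lemma lin_e1'[simp]: "lin (1,0) x = x" by (simp add: lin_def)
lemma ainv_U: "a \<in> U \<Longrightarrow> ainv a \<in> U" unfolding U_iff by (elim disjE; simp add: ainv_def)
lemma lin_ainv: "a \<in> U \<Longrightarrow> lin a (ainv a) = (1,0)" unfolding U_iff by (elim disjE; simp add: ainv_def lin_def)
lemma lin_inj: "u \<in> U \<Longrightarrow> lin a u = lin a' u \<Longrightarrow> a = a'"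
proof -
  assume u: "u \<in> U" and e: "lin a u = lin a' u"
  have "\<And>b. lin (ainv u) (lin b u) = b"
  proof -
    fix b
    have "lin (ainv u) (lin b u) = lin (ainv u) (lin u b)" by (simp only: lin_comm[of b u])
    also have "\<dots> = lin (lin (ainv u) u) b" by (simp only: lin_assoc)
    also have "\<dots> = lin (lin u (ainv u)) b" by (simp only: lin_comm[of "ainv u" u])
    also have "\<dots> = b" using lin_ainv[OF u] by simp
    finally show "lin (ainv u) (lin b u) = b" .
  qed
  then have "a = lin (ainv u) (lin a u)" "lin (ainv u) (lin a' u) = a'" by auto
  with e show "a = a'" by simp
qed
lemma lin_image_U: "a \<in> U \<Longrightarrow> lin a ` U = U"
proof
  assume a: "a \<in> U"
  show "lin a ` U \<subseteq> U" using a lin_U by blast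
  show "U \<subseteq> lin a ` U"
  proof
    fix x assume x: "x \<in> U"
    have "x = lin a (lin (ainv a) x)" by (simp only: lin_assoc lin_ainv[OF a] lin_e1')
    moreover have "lin (ainv a) x \<in> U" using lin_U ainv_U a x by blast
    ultimately show "x \<in> lin a ` U" by blast
  qed
qed

lemma VK_iff: "p \<in> VK \<longleftrightarrow> \<not> hex_centre p" by (simp add: VK_def)

lemma hc_cases: "hex_centre (i,j) \<longleftrightarrow> (i mod 3 = 0 \<and> j mod 3 = 0) \<or> (i mod 3 = 1 \<and> j mod 3 = 1)"
  unfolding hex_centre_def by auto

lemma hc_nbr: "hex_centre c \<Longrightarrow> u \<in> U \<Longrightarrow> c + u \<in> VK"
proof -
  assume a: "hex_centre c" "u \<in> U"
  obtain i j where c: "c = (i,j)" by (cases c)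
  have "(i mod 3 = 0 \<and> j mod 3 = 0) \<or> (i mod 3 = 1 \<and> j mod 3 = 1)" using a c hc_cases by simp
  then show ?thesis using a(2) unfolding c U_iff VK_def hex_centre_def
    by (elim disjE conjE; simp add: mrules)
qed

lemma hexagon_mem: "x \<in> hexagon c \<longleftrightarrow> x - c \<in> U"
  by (auto simp: hexagon_def padd_eq image_iff) (metis add.commute diff_add_cancel)

lemma hexagon_sub: "hex_centre c \<Longrightarrow> hexagon c \<subseteq> VK"
  by (auto simp: hexagon_def padd_eq hc_nbr)

lemma SV_VK: "SV s \<Longrightarrow> s \<in> VK"
  by (auto simp: SV_def VK_def hex_centre_def)
lemma SV_nbr_VK: "SV s \<Longrightarrow> u \<in> U \<Longrightarrow> s + u \<in> VK"
proof -
  assume a: "SV s" "u \<in> U"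
  obtain i j where c: "s = (i,j)" by (cases s)
  show ?thesis using a unfolding c U_iff VK_def hex_centre_def SV_def
    by (elim disjE; simp add: mrules)
qed
lemma SV_not_hex: "SV s \<Longrightarrow> hex_centre c \<Longrightarrow> s \<notin> hexagon c"
proof
  assume "SV s" "hex_centre c" "s \<in> hexagon c"
  then have "- (s - c) \<in> U" using U_neg hexagon_mem by blast
  then have "s + - (s - c) \<in> VK" using SV_nbr_VK \<open>SV s\<close> by blast
  then show False using \<open>hex_centre c\<close> by (simp add: VK_def)
qed

lemma nonS_hex: "p \<in> VK \<Longrightarrow> \<not> SV p \<Longrightarrow> \<exists>c. hex_centre c \<and> p \<in> hexagon c"
proof -
  assume a: "p \<in> VK" "\<not> SV p"
  obtain i j where p: "p = (i,j)" by (cases p)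
  have "\<exists>u\<in>U. hex_centre (p - u)"
    using a m3[of i] m3[of j] unfolding p VK_def SV_def hex_centre_def
    by (elim disjE; simp add: unit_vecs_def mrules)
  then obtain u where "u \<in> U" "hex_centre (p - u)" by blast
  then show ?thesis by (intro exI[of _ "p - u"]) (simp add: hexagon_mem)
qed

lemma decomp: "p \<in> VK \<Longrightarrow> \<exists>u. (u = 0 \<or> u \<in> U) \<and> SV (p - u)"
proof -
  assume a: "p \<in> VK"
  obtain i j where p: "p = (i,j)" by (cases p)
  have "\<exists>u\<in>insert 0 U. SV (p - u)"
    using a m3[of i] m3[of j] unfolding p VK_def SV_def hex_centre_def
    by (elim disjE; simp add: unit_vecs_def mrules)
  then show ?thesis by blast
qed

lemma card_U: "card U = 6" by (simp add: unit_vecs_def)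
lemma card_up: "card (up_tri p) = 3"
  by (cases p) (simp add: up_tri_def padd_eq)
lemma card_down: "card (down_tri p) = 3"
  by (cases p) (simp add: down_tri_def padd_eq)
lemma card_hex: "card (hexagon c) = 6"
proof -
  have "inj_on (padd c) U" by (auto simp: inj_on_def padd_eq)
  then show ?thesis unfolding hexagon_def using card_U card_image by metis
qed

lemma up_diffs: "x \<in> up_tri p \<Longrightarrow> y \<in> up_tri p \<Longrightarrow> x \<noteq> y \<Longrightarrow> y - x \<in> U"
  unfolding up_tri_def padd_eq U_iff by (elim insertE; simp; cases p; simp)
lemma down_diffs: "x \<in> down_tri p \<Longrightarrow> y \<in> down_tri p \<Longrightarrow> x \<noteq> y \<Longrightarrow> y - x \<in> U"
  unfolding down_tri_def padd_eq U_iff by (elim insertE; simp; cases p; simp)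

lemma FK_sub: "F \<in> FK \<Longrightarrow> F \<subseteq> VK"
  using hexagon_sub by (auto simp: FK_def)

lemma FK_cases: "F \<in> FK \<Longrightarrow>
   (card F = 3 \<and> (\<forall>x\<in>F. \<forall>y\<in>F. x \<noteq> y \<longrightarrow> y - x \<in> U)) \<or> (\<exists>c. hex_centre c \<and> F = hexagon c)"
  unfolding FK_def using card_up card_down up_diffs down_diffs by blast

lemma tri_face: assumes x: "x \<in> U" and sub: "{q, q + x, q + rot1 x} \<subseteq> VK"
  shows "{q, q + x, q + rot1 x} \<in> FK"
proof -
  have "\<exists>p. {q, q + x, q + rot1 x} = up_tri p \<or> {q, q + x, q + rot1 x} = down_tri p"
  proof -
    obtain i j where q: "q = (i,j)" by (cases q)
    show ?thesis using x unfolding U_iff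
    proof (elim disjE)
      assume "x = (1,0)" then show ?thesis
        by (intro exI[of _ q]) (auto simp: q up_tri_def padd_eq rot1_def)
    next
      assume "x = (0,1)" then show ?thesis
        by (intro exI[of _ "(i - 1, j)"]) (auto simp: q down_tri_def padd_eq rot1_def)
    next
      assume "x = (-1,1)" then show ?thesis
        by (intro exI[of _ "(i - 1, j)"]) (auto simp: q up_tri_def padd_eq rot1_def)
    next
      assume "x = (-1,0)" then show ?thesis
        by (intro exI[of _ "(i - 1, j - 1)"]) (auto simp: q down_tri_def padd_eq rot1_def)
    next
      assume "x = (0,-1)" then show ?thesis
        by (intro exI[of _ "(i, j - 1)"]) (auto simp: q up_tri_def padd_eq rot1_def)
    next
      assume "x = (1,-1)" then show ?thesis
        by (intro exI[of _ "(i, j - 1)"]) (auto simp: q down_tri_def padd_eq rot1_def)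
    qed
  qed
  then obtain p where h: "{q, q + x, q + rot1 x} = up_tri p \<or> {q, q + x, q + rot1 x} = down_tri p" by blast
  then show ?thesis using sub unfolding FK_def by blast
qed



lemma orient_lem: assumes "x \<in> U" "y \<in> U" "y - x \<in> U" "0 < orient q (q + x) (q + y)" shows "y = rot1 x"
  using assms(1,2) unfolding U_iff apply (elim disjE) using assms(3-) by (simp_all add: unit_vecs_def orient_def rot1_def)

lemma step_lem: assumes "x \<in> U" "y \<in> U" "y - rot1 x \<in> U" "y \<noteq> x" shows "y = rot1 (rot1 x)"
  using assms(1,2) unfolding U_iff apply (elim disjE) using assms(3-) by (simp_all add: unit_vecs_def rot1_def zero_prod_def)

lemma hexc_lem: assumes "b \<in> U" "x \<in> U" "y \<in> U" "b + x = rot1 b + y" shows "b + x = 0 \<or> x = rot1 b"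
  using assms(1,2,3) unfolding U_iff apply (elim disjE) using assms(4-) by (simp_all add: rot1_def zero_prod_def)

lemma int2_lem: "b \<in> U \<Longrightarrow> y - (b + rot1 b) \<in> U \<Longrightarrow> y - (b + rot5 b) \<in> U \<Longrightarrow> y = b \<or> y = b + b"
proof -
  assume a: "b \<in> U" "y - (b + rot1 b) \<in> U" "y - (b + rot5 b) \<in> U"
  obtain z where z: "z \<in> U" "y = b + rot1 b + z" using a(2) by (metis diff_add_cancel add.commute)
  have a3: "b + rot1 b + z - (b + rot5 b) \<in> U" using a(3) z(2) by simp
  show ?thesis using a(1) z(1) unfolding z(2) U_iff apply (elim disjE) using a3
    by (simp_all add: rot1_def rot5_def unit_vecs_def)
qed


lemma S_unique: "SV p \<Longrightarrow> SV q \<Longrightarrow> p - y \<in> U \<Longrightarrow> q - y \<in> U \<Longrightarrow> p = q"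
proof -
  assume a: "SV p" "SV q" "p - y \<in> U" "q - y \<in> U"
  have m: "(fst (p - y) - fst (q - y)) mod 3 = 0" "(snd (p - y) - snd (q - y)) mod 3 = 0"
    using a(1,2) unfolding SV_def by (simp_all add: mod_diff_eq[symmetric])
  have "p - y = q - y" using a(3,4) m unfolding U_iff by (elim disjE; simp)
  then show ?thesis by simp
qed
lemma SV_add3: "SV t \<Longrightarrow> SV (t + b + b + b)"
proof -
  assume a: "SV t"
  obtain i j where t: "t = (i,j)" by (cases t)
  obtain k l where b: "b = (k,l)" by (cases b)
  show ?thesis using a unfolding t b SV_def by simp
qed

lemma autk_bij: "g \<in> AutK \<Longrightarrow> bij_betw g VK VK" by (simp add: AutK_def)
lemma autk_inj: "g \<in> AutK \<Longrightarrow> inj_on g VK" using autk_bij bij_betw_imp_inj_on by blast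
lemma autk_VK: "g \<in> AutK \<Longrightarrow> v \<in> VK \<Longrightarrow> g v \<in> VK" using autk_bij bij_betwE by metis
lemma autk_img: "g \<in> AutK \<Longrightarrow> g ` VK = VK" using autk_bij bij_betw_imp_surj_on by metis
lemma autk_face: "g \<in> AutK \<Longrightarrow> F \<in> FK \<Longrightarrow> g ` F \<in> FK"
  using FK_sub unfolding AutK_def by blast
lemma autk_face_rev: "g \<in> AutK \<Longrightarrow> F \<subseteq> VK \<Longrightarrow> g ` F \<in> FK \<Longrightarrow> F \<in> FK"
  by (auto simp: AutK_def)
lemma autk_card: "g \<in> AutK \<Longrightarrow> F \<subseteq> VK \<Longrightarrow> card (g ` F) = card F"
  by (rule card_image[OF inj_on_subset[OF autk_inj]])
lemma autk_off: "g \<in> AutK \<Longrightarrow> v \<notin> VK \<Longrightarrow> g v = v" unfolding AutK_def by blast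

lemma tri_img: assumes g: "g \<in> AutK" and F: "F \<in> FK" "card F \<le> 3" and xy: "x \<in> F" "y \<in> F" "x \<noteq> y"
  shows "g y - g x \<in> U"
proof -
  have G: "g ` F \<in> FK" using autk_face g F by blast
  have cG: "card (g ` F) \<le> 3" using autk_card[OF g FK_sub[OF F(1)]] F(2) by simp
  have ne: "g x \<noteq> g y" using autk_inj[OF g] xy FK_sub[OF F(1)] by (meson inj_on_contraD subsetD)
  show ?thesis using FK_cases[OF G]
  proof
    assume "card (g ` F) = 3 \<and> (\<forall>x\<in>g ` F. \<forall>y\<in>g ` F. x \<noteq> y \<longrightarrow> y - x \<in> U)"
    then show ?thesis using ne xy by blast
  next
    assume "\<exists>c. hex_centre c \<and> g ` F = hexagon c"
    then obtain c where "g ` F = hexagon c" by blast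
    then have "card (g ` F) = 6" using card_hex by simp
    then show ?thesis using cG by simp
  qed
qed

lemma hex_img: assumes g: "g \<in> AutK" and c: "hex_centre c"
  shows "\<exists>c'. hex_centre c' \<and> g ` hexagon c = hexagon c'"
proof -
  have H: "hexagon c \<in> FK" using c unfolding FK_def by blast
  have G: "g ` hexagon c \<in> FK" using autk_face g H by blast
  have cG: "card (g ` hexagon c) = 6" using autk_card[OF g FK_sub[OF H]] card_hex by simp
  show ?thesis using FK_cases[OF G] cG by fastforce
qed

lemma SV_img: assumes g: "g \<in> AutK" and s: "SV s" shows "SV (g s)"
proof (rule ccontr)
  assume n: "\<not> SV (g s)"
  have gs: "g s \<in> VK" using autk_VK[OF g SV_VK[OF s]] .
  obtain c where c: "hex_centre c" "g s \<in> hexagon c" using nonS_hex[OF gs n] by blast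
  define F where "F = {v \<in> VK. g v \<in> hexagon c}"
  have FV: "F \<subseteq> VK" by (auto simp: F_def)
  have gF: "g ` F = hexagon c"
  proof
    show "g ` F \<subseteq> hexagon c" by (auto simp: F_def)
    show "hexagon c \<subseteq> g ` F"
    proof
      fix x assume x: "x \<in> hexagon c"
      then have "x \<in> VK" using hexagon_sub c by blast
      then obtain v where "v \<in> VK" "x = g v" using autk_img[OF g] by blast
      then show "x \<in> g ` F" using x by (auto simp: F_def)
    qed
  qed
  have H: "hexagon c \<in> FK" using c unfolding FK_def by blast
  have FF: "F \<in> FK" using autk_face_rev[OF g FV] gF H by simp
  have cF: "card F = 6" using autk_card[OF g FV] gF card_hex by simp
  have sF: "s \<in> F" using c(2) SV_VK[OF s] by (simp add: F_def)
  show False using FK_cases[OF FF]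
  proof
    assume "card F = 3 \<and> (\<forall>x\<in>F. \<forall>y\<in>F. x \<noteq> y \<longrightarrow> y - x \<in> U)" then show False using cF by simp
  next
    assume "\<exists>c. hex_centre c \<and> F = hexagon c"
    then show False using sF SV_not_hex[OF s] by blast
  qed
qed

lemma card3: "card {a, b, c::pt} \<le> 3" by (simp add: card_insert_if)

lemma mp1': "(1 + (i::int)) mod 3 = (if i mod 3 = 2 then 0 else i mod 3 + 1)" by presburger
lemma mp2': "(2 + (i::int)) mod 3 = (if i mod 3 = 0 then 2 else i mod 3 - 1)" by presburger
lemma mp3': "(3 + (i::int)) mod 3 = i mod 3" by presburger
lemmas mrules' = mrules mp1' mp2' mp3'

lemma star_tri: "SV s \<Longrightarrow> u \<in> U \<Longrightarrow> {s, s + u, s + rot1 u} \<in> FK"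
  by (rule tri_face) (auto simp: SV_VK SV_nbr_VK rot1_U)

lemma U_nz: "u \<in> U \<Longrightarrow> u \<noteq> 0" unfolding U_iff by (auto simp: zero_prod_def)
lemma rot1_ne: "u \<in> U \<Longrightarrow> rot1 u \<noteq> u" unfolding U_iff by (auto simp: rot1_def)

lemma star_lem:
  assumes g: "g \<in> AutK" and op: "orientation_preserving g" and s: "SV s"
  shows "SV (g s) \<and> g (s + (1,0)) - g s \<in> U \<and> (\<forall>u\<in>U. g (s + u) = g s + lin (g (s + (1,0)) - g s) u)"
proof -
  define t where "t = g s"
  define d where "d u = g (s + u) - t" for u
  have gd: "g (s + u) = t + d u" for u by (simp add: d_def)
  have dU: "d u \<in> U" if u: "u \<in> U" for u
  proof -
    have "g (s + u) - g s \<in> U"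
      by (rule tri_img[OF g star_tri[OF s u] card3]) (use U_nz[OF u] in auto)
    then show ?thesis by (simp add: d_def t_def)
  qed
  have dstep: "d (rot1 u) - d u \<in> U" if u: "u \<in> U" for u
  proof -
    have "g (s + rot1 u) - g (s + u) \<in> U"
      by (rule tri_img[OF g star_tri[OF s u] card3]) (use rot1_ne[OF u] in auto)
    then show ?thesis by (simp add: d_def)
  qed
  have dinj: "d u \<noteq> d u'" if "u \<in> U" "u' \<in> U" "u \<noteq> u'" for u u'
  proof
    assume "d u = d u'"
    then have "g (s + u) = g (s + u')" by (simp add: d_def)
    moreover have "s + u \<in> VK" "s + u' \<in> VK" using SV_nbr_VK s that by auto
    ultimately have "s + u = s + u'" using autk_inj[OF g] by (meson inj_onD)
    then show False using that by simp
  qed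
  define a where "a = d (1,0)"
  have e1U: "(1::int,0::int) \<in> U" by (simp add: U_iff)
  have aU: "a \<in> U" using dU e1U by (simp add: a_def)
  have upv: "up_tri s \<subseteq> VK" using SV_VK SV_nbr_VK s by (auto simp: up_tri_def padd_eq U_iff)
  have "0 < orient (g s) (g (padd s (1,0))) (g (padd s (0,1)))"
  proof (cases s)
    case (Pair i j) then show ?thesis using op upv by (simp add: orientation_preserving_def)
  qed
  then have o: "0 < orient t (t + d (1,0)) (t + d (0,1))" by (simp add: padd_eq gd t_def)
  have e2U: "(0::int,1::int) \<in> U" by (simp add: U_iff)
  have o': "0 < orient t (t + a) (t + d (0,1))" using o by (simp add: a_def)
  have st: "d (0,1) - a \<in> U" using dstep[OF e1U] by (simp add: rot1_def a_def)
  have d1: "d (0,1) = rot1 a" using orient_lem[OF aU dU[OF e2U] st o'] .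
  have rot1_simps: "rot1 (1,0) = (0,1)" "rot1 (0,1) = (-1,1)" "rot1 (-1,1) = (-1,0)"
     "rot1 (-1,0) = (0,-1)" "rot1 (0,-1) = (1,-1)" "rot1 (1,-1) = (1,0)"
    by (simp_all add: rot1_def)
  have d2: "d (-1,1) = rot1 (rot1 a)"
    using step_lem[OF aU, of "d (-1,1)"] dU[of "(-1,1)"] dstep[of "(0,1)"] dinj[of "(-1,1)" "(1,0)"]
    by (simp add: U_iff rot1_simps d1 a_def)
  have d3: "d (-1,0) = rot1 (rot1 (rot1 a))"
    using step_lem[OF rot1_U[OF aU], of "d (-1,0)"] dU[of "(-1,0)"] dstep[of "(-1,1)"] dinj[of "(-1,0)" "(0,1)"]
    by (simp add: U_iff rot1_simps d1 d2)
  have d4: "d (0,-1) = rot1 (rot1 (rot1 (rot1 a)))"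
    using step_lem[OF rot1_U[OF rot1_U[OF aU]], of "d (0,-1)"] dU[of "(0,-1)"] dstep[of "(-1,0)"] dinj[of "(0,-1)" "(-1,1)"]
    by (simp add: U_iff rot1_simps d2 d3)
  have d5: "d (1,-1) = rot1 (rot1 (rot1 (rot1 (rot1 a))))"
    using step_lem[OF rot1_U[OF rot1_U[OF rot1_U[OF aU]]], of "d (1,-1)"] dU[of "(1,-1)"] dstep[of "(0,-1)"] dinj[of "(1,-1)" "(-1,0)"]
    by (simp add: U_iff rot1_simps d3 d4)
  have main: "\<forall>u\<in>U. d u = lin a u"
  proof
    fix u assume "u \<in> U"
    then show "d u = lin a u" unfolding U_iff using d1 d2 d3 d4 d5
      by (elim disjE) (simp_all add: lin_def rot1_def a_def)
  qed
  show ?thesis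
    using SV_img[OF g s] aU main by (simp add: gd a_def t_def)
qed


lemma hexU1: "SV s \<Longrightarrow> u \<in> U \<Longrightarrow> hex_centre (s + u + rot1 u)"
proof -
  assume a: "SV s" "u \<in> U"
  obtain i j where c: "s = (i,j)" by (cases s)
  show ?thesis using a unfolding c U_iff hex_centre_def SV_def
    by (elim disjE conjE; simp add: mrules' rot1_def)
qed
lemma hexU5: "SV s \<Longrightarrow> u \<in> U \<Longrightarrow> hex_centre (s + u + rot5 u)"
proof -
  assume a: "SV s" "u \<in> U"
  obtain i j where c: "s = (i,j)" by (cases s)
  show ?thesis using a unfolding c U_iff hex_centre_def SV_def
    by (elim disjE conjE; simp add: mrules' rot5_def)
qed
lemma u_rot1_U: "u \<in> U \<Longrightarrow> u - rot1 u \<in> U" unfolding U_iff by (elim disjE; simp add: rot1_def)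
lemma u_rot5_U: "u \<in> U \<Longrightarrow> u - rot5 u \<in> U" unfolding U_iff by (elim disjE; simp add: rot5_def)

lemma hexc_full: assumes t: "SV t" and b: "b \<in> U" and c: "hex_centre c"
  and h1: "t + b \<in> hexagon c" and h2: "t + rot1 b \<in> hexagon c"
  shows "c = t + b + rot1 b"
proof -
  have x: "c - (t + b) \<in> U" using h1 U_neg by (fastforce simp: hexagon_mem)
  have y: "c - (t + rot1 b) \<in> U" using h2 U_neg by (fastforce simp: hexagon_mem)
  have "b + (c - (t + b)) = rot1 b + (c - (t + rot1 b))" by (simp add: algebra_simps)
  from hexc_lem[OF b x y this] show ?thesis
  proof
    assume "b + (c - (t + b)) = 0"
    then have "c = t" by (simp add: algebra_simps)
    then show ?thesis using c SV_VK[OF t] by (simp add: VK_def)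
  next
    assume "c - (t + b) = rot1 b"
    then show ?thesis by (simp add: algebra_simps)
  qed
qed

lemma prop_lem:
  assumes g: "g \<in> AutK" and op: "orientation_preserving g" and s: "SV s" and a: "a \<in> U"
    and st: "\<forall>v\<in>U. g (s + v) = g s + lin a v" and u: "u \<in> U"
  shows "g (s + u + u + u) = g s + lin a (u + u + u) \<and>
         (\<forall>v\<in>U. g (s + u + u + u + v) = g (s + u + u + u) + lin a v)"
proof -
  define t where "t = g s"
  define b where "b = lin a u"
  have bU: "b \<in> U" using lin_U a u by (simp add: b_def)
  have tS: "SV t" using SV_img[OF g s] by (simp add: t_def)
  have g1: "g (s + u) = t + b" using st u by (simp add: t_def b_def)
  have g2: "g (s + rot1 u) = t + rot1 b" using st rot1_U[OF u] by (simp add: t_def b_def lin_rot1)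
  have g3: "g (s + rot5 u) = t + rot5 b" using st rot5_U[OF u] by (simp add: t_def b_def lin_rot5)
  have c1: "hex_centre (s + u + rot1 u)" using hexU1 s u .
  have c2: "hex_centre (s + u + rot5 u)" using hexU5 s u .
  obtain c1' where c1': "hex_centre c1'" "g ` hexagon (s + u + rot1 u) = hexagon c1'"
    using hex_img[OF g c1] by blast
  obtain c2' where c2': "hex_centre c2'" "g ` hexagon (s + u + rot5 u) = hexagon c2'"
    using hex_img[OF g c2] by blast
  have m1: "s + u \<in> hexagon (s + u + rot1 u)" "s + rot1 u \<in> hexagon (s + u + rot1 u)"
    "s + u + u \<in> hexagon (s + u + rot1 u)"
    using U_neg[OF rot1_U[OF u]] U_neg[OF u] u_rot1_U[OF u] by (simp_all add: hexagon_mem algebra_simps)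
  have m2: "s + u \<in> hexagon (s + u + rot5 u)" "s + rot5 u \<in> hexagon (s + u + rot5 u)"
    "s + u + u \<in> hexagon (s + u + rot5 u)"
    using U_neg[OF rot5_U[OF u]] U_neg[OF u] u_rot5_U[OF u] by (simp_all add: hexagon_mem algebra_simps)
  have e1: "c1' = t + b + rot1 b"
    using hexc_full[OF tS bU c1'(1)] m1(1,2) c1'(2) g1 g2 by (metis image_eqI)
  have e2: "c2' = t + rot5 b + rot1 (rot5 b)"
    using hexc_full[OF tS rot5_U[OF bU] c2'(1)] m2(1,2) c2'(2) g1 g3 by (metis image_eqI rot1_rot5)
  have y1: "g (s + u + u) - t - (b + rot1 b) \<in> U"
    using m1(3) c1'(2) e1 by (metis diff_diff_eq hexagon_mem image_eqI add.assoc)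
  have y2: "g (s + u + u) - t - (b + rot5 b) \<in> U"
    using m2(3) c2'(2) e2 by (metis diff_diff_eq hexagon_mem image_eqI add.assoc add.commute rot1_rot5)
  have vk1: "s + u \<in> VK" using SV_nbr_VK s u .
  have vk2: "s + u + u \<in> VK" using m1(3) hexagon_sub[OF c1] by blast
  have ne: "s + u + u \<noteq> s + u" using U_nz[OF u] by simp
  have "g (s + u + u) \<noteq> g (s + u)" using autk_inj[OF g] vk1 vk2 ne by (meson inj_onD)
  then have gu2: "g (s + u + u) = t + b + b"
    using int2_lem[OF bU y1 y2] g1 by (auto simp: algebra_simps)
  define s' where "s' = s + u + u + u"
  have s'S: "SV s'" using SV_add3[OF s] by (simp add: s'_def)
  have "g s' - g (s' + - u) \<in> U"
    by (rule tri_img[OF g star_tri[OF s'S U_neg[OF u]] card3]) (use U_nz[OF u] in auto)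
  then have "g s' - (t + b + b) \<in> U" using gu2 by (simp add: s'_def algebra_simps)
  moreover have "(t + b + b + b) - (t + b + b) \<in> U" using bU by simp
  moreover have "SV (t + b + b + b)" using SV_add3[OF tS] .
  ultimately have gs': "g s' = t + b + b + b" using S_unique SV_img[OF g s'S] by blast
  obtain a' where a': "a' \<in> U" "\<forall>v\<in>U. g (s' + v) = g s' + lin a' v"
    using star_lem[OF g op s'S] by blast
  have "g (s' + - u) = g s' + lin a' (- u)" using a'(2) U_neg[OF u] by blast
  then have "t + b + b = t + b + b + b - lin a' u" using gu2 gs' by (simp add: s'_def lin_neg algebra_simps)
  then have "lin a' u = lin a u" by (simp add: b_def algebra_simps)
  then have "a' = a" using lin_inj[OF u] by blast
  then show ?thesis using gs' a'(2) by (simp add: s'_def t_def b_def lin_add)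
qed


lemma SV_form: "SV s \<Longrightarrow> s = (2,2) + (3 * ((fst s - 2) div 3), 3 * ((snd s - 2) div 3))"
  by (cases s) (auto simp: SV_def, presburger+)

lemma SV_s0: "SV (2,2)" by (simp add: SV_def)

lemma global_lem:
  assumes g: "g \<in> AutK" and op: "orientation_preserving g"
  shows "\<exists>a b. a \<in> U \<and> (\<forall>v\<in>VK. g v = lin a v + b)"
proof -
  define s0 :: pt where "s0 = (2,2)"
  have s0: "SV s0" by (simp add: s0_def SV_def)
  obtain a where a: "a \<in> U" "\<forall>v\<in>U. g (s0 + v) = g s0 + lin a v"
    using star_lem[OF g op s0] by blast
  define Q where "Q m n \<longleftrightarrow> g (s0 + (3*m, 3*n)) = g s0 + lin a (3*m, 3*n) \<and>
      (\<forall>v\<in>U. g (s0 + (3*m,3*n) + v) = g (s0 + (3*m,3*n)) + lin a v)" for m n :: int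
  have SVm: "SV (s0 + (3*m, 3*n))" for m n :: int using s0 unfolding SV_def s0_def by simp
  have Qstep: "Q (m + fst u) (n + snd u)" if q: "Q m n" and u: "u \<in> U" for m n u
  proof -
    let ?s = "s0 + (3*m, 3*n)"
    have st: "\<forall>v\<in>U. g (?s + v) = g ?s + lin a v" using q by (simp add: Q_def)
    from prop_lem[OF g op SVm[of m n] a(1) st u]
    have p: "g (?s + u + u + u) = g ?s + lin a (u + u + u)"
      "\<forall>v\<in>U. g (?s + u + u + u + v) = g (?s + u + u + u) + lin a v" by blast+
    have eq: "?s + u + u + u = s0 + (3 * (m + fst u), 3 * (n + snd u))"
      by (cases u) (simp add: algebra_simps)
    have eq2: "(3 * (m + fst u), 3 * (n + snd u)) = (3*m, 3*n) + (u + u + u)"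
      by (cases u) (simp add: algebra_simps)
    have eq3: "lin a (3*m, 3*n) + lin a (u + u + u) = lin a (3 * (m + fst u), 3 * (n + snd u))"
      by (cases u) (simp add: lin_def algebra_simps)
    have r1: "g (s0 + (3 * (m + fst u), 3 * (n + snd u))) = g s0 + lin a (3 * (m + fst u), 3 * (n + snd u))"
    proof -
      have gs: "g ?s = g s0 + lin a (3*m,3*n)" using q by (simp add: Q_def)
      have "g (s0 + (3 * (m + fst u), 3 * (n + snd u))) = g ?s + lin a (u + u + u)"
        using p(1) by (simp only: eq)
      also have "\<dots> = g s0 + (lin a (3*m,3*n) + lin a (u + u + u))" by (simp only: gs add.assoc)
      also have "\<dots> = g s0 + lin a (3 * (m + fst u), 3 * (n + snd u))" by (simp only: eq3)
      finally show ?thesis .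
    qed
    show ?thesis unfolding Q_def using r1 p(2) unfolding eq by blast
  qed
  have e1: "(1::int,0::int) \<in> U" "(-1::int,0::int) \<in> U" "(0::int,1::int) \<in> U" "(0::int,-1::int) \<in> U"
    by (simp_all add: U_iff)
  have Q00: "Q 0 0" using a by (simp add: Q_def zero_prod_def[symmetric])
  have Qm0: "Q m 0" for m
  proof (induct m rule: int_induct[where k=0])
    case base then show ?case using Q00 .
  next
    case (step1 i) then show ?case using Qstep[OF _ e1(1), of i 0] by simp
  next
    case (step2 i) then show ?case using Qstep[OF _ e1(2), of i 0] by simp
  qed
  have Qmn: "Q m n" for m n
  proof (induct n rule: int_induct[where k=0])
    case base then show ?case using Qm0 .
  next
    case (step1 i) then show ?case using Qstep[OF _ e1(3), of m i] by simp
  next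
    case (step2 i) then show ?case using Qstep[OF _ e1(4), of m i] by simp
  qed
  have "\<forall>v\<in>VK. g v = lin a v + (g s0 - lin a s0)"
  proof
    fix v assume v: "v \<in> VK"
    obtain w where w: "w = 0 \<or> w \<in> U" "SV (v - w)" using decomp[OF v] by blast
    define m where "m = (fst (v - w) - 2) div 3"
    define n where "n = (snd (v - w) - 2) div 3"
    have vw: "v - w = s0 + (3*m, 3*n)" using SV_form[OF w(2)] by (simp add: m_def n_def s0_def)
    have q: "Q m n" using Qmn .
    have gs: "g (v - w) = g s0 + lin a (3*m, 3*n)" using q vw by (simp add: Q_def)
    have gv: "g v = g (v - w) + lin a w"
    proof (cases "w = 0")
      case True then show ?thesis by simp
    next
      case False
      then have "w \<in> U" using w(1) by blast
      then show ?thesis using q vw by (simp add: Q_def) (metis diff_add_cancel)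
    qed
    have "lin a v = lin a (v - w) + lin a w" by (simp add: lin_add[symmetric])
    also have "lin a (v - w) = lin a s0 + lin a (3*m, 3*n)" using vw by (simp add: lin_add)
    finally show "g v = lin a v + (g s0 - lin a s0)" using gv gs by (simp add: algebra_simps)
  qed
  then show ?thesis using a(1) by blast
qed

locale freeg =
  fixes g :: "pt \<Rightarrow> pt" and a b :: pt
  assumes g: "g \<in> AutK" and aU: "a \<in> U" and A: "\<forall>v\<in>VK. g v = lin a v + b"
    and fv: "\<forall>v\<in>VK. g v \<noteq> v" and fe: "\<forall>e\<in>EK. g ` e \<noteq> e" and ff: "\<forall>F\<in>FK. g ` F \<noteq> F"
begin

lemma fixpt: assumes x: "lin a x + b = x" shows False
proof (cases "x \<in> VK")
  case True then show False using fv A x by auto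
next
  case False
  then have c: "hex_centre x" by (simp add: VK_def)
  have H: "hexagon x \<in> FK" using c unfolding FK_def by blast
  have "g ` hexagon x = hexagon x"
  proof -
    have "g ` hexagon x = (\<lambda>u. g (x + u)) ` U" by (simp add: hexagon_def padd_eq image_image)
    also have "\<dots> = (\<lambda>u. x + lin a u) ` U"
    proof (rule image_cong[OF refl])
      fix u assume u: "u \<in> U"
      have "x + u \<in> VK" using hc_nbr[OF c u] .
      then have "g (x + u) = lin a x + b + lin a u" using A by (simp add: lin_add algebra_simps)
      then show "g (x + u) = x + lin a u" using x by simp
    qed
    also have "\<dots> = (\<lambda>u. x + u) ` (lin a ` U)" by (simp add: image_image)
    also have "\<dots> = hexagon x" using lin_image_U[OF aU] by (simp add: hexagon_def padd_eq)
    finally show ?thesis .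
  qed
  then show False using ff H by blast
qed

lemma edge: assumes w: "w \<in> U" and e1: "lin a p + b = p + w" and e2: "lin a (p + w) + b = p"
  shows False
proof -
  have w': "- w \<in> U" using U_neg[OF w] .
  consider (both) "p \<in> VK" "p + w \<in> VK" | (n1) "p \<notin> VK" | (n2) "p + w \<notin> VK" by blast
  then show False
  proof cases
    case both
    have d: "(fst (p + w) - fst p, snd (p + w) - snd p) \<in> U" using w by simp
    have "{p, p + w} \<in> EK" unfolding EK_def using both d by blast
    moreover have "g ` {p, p + w} = {p, p + w}" using both A e1 e2 by auto
    ultimately show False using fe by blast
  next
    case n1
    then have "p + w \<in> VK" using hc_nbr[OF _ w] by (simp add: VK_def)
    then have "g (p + w) = p" using A e2 by simp
    then show False using n1 autk_VK[OF g \<open>p + w \<in> VK\<close>] by simp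
  next
    case n2
    then have hc: "hex_centre (p + w)" by (simp add: VK_def)
    have "p + w + - w \<in> VK" using hc_nbr[OF hc w'] .
    then have pv: "p \<in> VK" by simp
    then have "g p = p + w" using A e1 by simp
    then show False using n2 autk_VK[OF g pv] by simp
  qed
qed

lemma cyc3: assumes w: "w \<in> U" and q2: "r = rot1 w \<or> r = rot5 w"
  and e0: "lin a p + b = p + w" and e1: "lin a (p + w) + b = p + r" and e2: "lin a (p + r) + b = p"
  shows False
proof -
  have rU: "r \<in> U" using q2 rot1_U[OF w] rot5_U[OF w] by blast
  have d1: "r - w \<in> U"
    using q2 U_neg[OF u_rot1_U[OF w]] U_neg[OF u_rot5_U[OF w]] by (auto simp: algebra_simps)
  have d1': "w - r \<in> U" using U_neg[OF d1] by simp
  have T: "{p, p + w, p + r} \<subseteq> VK \<Longrightarrow> {p, p + w, p + r} \<in> FK"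
  proof -
    assume sub: "{p, p + w, p + r} \<subseteq> VK"
    show ?thesis using q2
    proof
      assume "r = rot1 w" then show ?thesis using tri_face[OF w] sub by simp
    next
      assume r: "r = rot5 w"
      have "{p, p + w, p + r} = {p, p + rot5 w, p + rot1 (rot5 w)}" using r by auto
      then show ?thesis using tri_face[OF rot5_U[OF w], of p] sub by simp
    qed
  qed
  consider (all) "p \<in> VK" "p + w \<in> VK" "p + r \<in> VK" | (n0) "p \<notin> VK" | (n1) "p + w \<notin> VK"
    | (n2) "p + r \<notin> VK" by blast
  then show False
  proof cases
    case all
    have "g ` {p, p + w, p + r} = {p, p + w, p + r}" using all A e0 e1 e2 by auto
    then show False using ff T all by blast
  next
    case n0
    then have v: "p + r \<in> VK" using hc_nbr[OF _ rU] by (simp add: VK_def)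
    then have "g (p + r) = p" using A e2 by simp
    then show False using n0 autk_VK[OF g v] by simp
  next
    case n1
    have hc: "hex_centre (p + w)" using n1 by (simp add: VK_def)
    have "p + w + - w \<in> VK" using hc_nbr[OF hc U_neg[OF w]] .
    then have v: "p \<in> VK" by simp
    then have "g p = p + w" using A e0 by simp
    then show False using n1 autk_VK[OF g v] by simp
  next
    case n2
    have hc: "hex_centre (p + r)" using n2 by (simp add: VK_def)
    have "p + r + (w - r) \<in> VK" using hc_nbr[OF hc d1'] .
    then have v: "p + w \<in> VK" by (simp add: algebra_simps)
    then have "g (p + w) = p + r" using A e1 by simp
    then show False using n2 autk_VK[OF g v] by simp
  qed
qed

lemma a_is_id: "a = (1,0)"
proof -
  obtain b1 b2 where b: "b = (b1, b2)" by (cases b)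
  show ?thesis using aU unfolding U_iff
  proof (elim disjE)
    assume "a = (1,0)" then show ?thesis .
  next
    assume a: "a = (0,1)"
    show ?thesis using fixpt[of "(- b2, b1 + b2)"] by (simp add: a b lin_def)
  next
    assume a: "a = (1,-1)"
    show ?thesis using fixpt[of "(b1 + b2, - b1)"] by (simp add: a b lin_def)
  next
    assume a: "a = (-1,0)"
    have "\<exists>k. b1 = 2*k \<or> b1 = 2*k+1" by presburger
    then obtain k where k: "b1 = 2*k \<or> b1 = 2*k+1" by blast
    have "\<exists>l. b2 = 2*l \<or> b2 = 2*l+1" by presburger
    then obtain l where l: "b2 = 2*l \<or> b2 = 2*l+1" by blast
    show ?thesis using k l
    proof (elim disjE)
      assume "b1 = 2*k" "b2 = 2*l" then show ?thesis using fixpt[of "(k, l)"] by (simp add: a b lin_def)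
    next
      assume "b1 = 2*k+1" "b2 = 2*l" then show ?thesis using edge[of "(1,0)" "(k,l)"] by (simp add: a b lin_def U_iff)
    next
      assume "b1 = 2*k" "b2 = 2*l+1" then show ?thesis using edge[of "(0,1)" "(k,l)"] by (simp add: a b lin_def U_iff)
    next
      assume "b1 = 2*k+1" "b2 = 2*l+1" then show ?thesis using edge[of "(1,-1)" "(k,l+1)"] by (simp add: a b lin_def U_iff)
    qed
  next
    assume a: "a = (-1,1)"
    have "\<exists>k. b1 = b2 + 3*k \<or> b1 = b2 + 3*k + 1 \<or> b1 = b2 + 3*k + 2" by presburger
    then obtain k where k: "b1 = b2 + 3*k \<or> b1 = b2 + 3*k + 1 \<or> b1 = b2 + 3*k + 2" by blast
    show ?thesis using k
    proof (elim disjE)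
      assume "b1 = b2 + 3*k" then show ?thesis using fixpt[of "(k, b2 + k)"] by (simp add: a b lin_def)
    next
      assume "b1 = b2 + 3*k + 1" then show ?thesis
        using cyc3[of "(1,0)" "(0,1)" "(k, k + b2)"] by (simp add: a b lin_def U_iff rot1_def)
    next
      assume "b1 = b2 + 3*k + 2" then show ?thesis
        using cyc3[of "(0,1)" "(-1,1)" "(k + 1, k + b2)"] by (simp add: a b lin_def U_iff rot1_def)
    qed
  next
    assume a: "a = (0,-1)"
    have "\<exists>k. b2 = b1 + 3*k \<or> b2 = b1 + 3*k + 1 \<or> b2 = b1 + 3*k + 2" by presburger
    then obtain k where k: "b2 = b1 + 3*k \<or> b2 = b1 + 3*k + 1 \<or> b2 = b1 + 3*k + 2" by blast
    show ?thesis using k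
    proof (elim disjE)
      assume "b2 = b1 + 3*k" then show ?thesis using fixpt[of "(k + b1, k)"] by (simp add: a b lin_def)
    next
      assume "b2 = b1 + 3*k + 1" then show ?thesis
        using cyc3[of "(0,1)" "(1,0)" "(k + b1, k)"] by (simp add: a b lin_def U_iff rot5_def)
    next
      assume "b2 = b1 + 3*k + 2" then show ?thesis
        using cyc3[of "(1,0)" "(1,-1)" "(k + b1, k + 1)"] by (simp add: a b lin_def U_iff rot5_def)
    qed
  qed
qed

end

lemma classify:
  assumes g: "g \<in> AutK" and op: "orientation_preserving g"
    and fr: "g \<noteq> id \<longrightarrow> (\<forall>v\<in>VK. g v \<noteq> v) \<and> (\<forall>e\<in>EK. g ` e \<noteq> e) \<and> (\<forall>F\<in>FK. g ` F \<noteq> F)"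
  shows "\<exists>w. fst w mod 3 = 0 \<and> snd w mod 3 = 0 \<and> (\<forall>v\<in>VK. g v = v + w)"
proof (cases "g = id")
  case True then show ?thesis by (intro exI[of _ 0]) simp
next
  case False
  obtain a b where ab: "a \<in> U" "\<forall>v\<in>VK. g v = lin a v + b" using global_lem[OF g op] by blast
  interpret freeg g a b using g ab fr False by unfold_locales auto
  have "a = (1,0)" by (rule a_is_id)
  then have gv: "\<forall>v\<in>VK. g v = v + b" using ab by (simp add: add.commute)
  have "SV (g (2,2))" using SV_img[OF g SV_s0] .
  then have "SV ((2,2) + b)" using gv SV_VK[OF SV_s0] by simp
  then have "fst b mod 3 = 0 \<and> snd b mod 3 = 0" by (cases b) (simp add: SV_def, presburger)
  then show ?thesis using gv by (intro exI[of _ b]) simp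
qed

lemma hc_trans: "fst u mod 3 = 0 \<Longrightarrow> snd u mod 3 = 0 \<Longrightarrow> hex_centre (p + u) \<longleftrightarrow> hex_centre p"
proof -
  assume u: "fst u mod 3 = 0" "snd u mod 3 = 0"
  have "(fst p + fst u) mod 3 = fst p mod 3" "(snd p + snd u) mod 3 = snd p mod 3"
    using u by (simp_all add: mod_add_right_eq[symmetric])
  then show ?thesis by (simp add: hex_centre_def)
qed

definition rho :: "pt \<Rightarrow> pt" where "rho p = (4,4) - p"

lemma rho_rho[simp]: "rho (rho p) = p" by (simp add: rho_def)

lemma hc_rho: "hex_centre (rho p) \<longleftrightarrow> hex_centre p"
proof -
  obtain i j where p: "p = (i,j)" by (cases p)
  have "(4 - i) mod 3 = (if i mod 3 = 0 then 1 else if i mod 3 = 1 then 0 else 2)"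
       "(4 - j) mod 3 = (if j mod 3 = 0 then 1 else if j mod 3 = 1 then 0 else 2)" by presburger+
  then show ?thesis using m3[of i] m3[of j] unfolding p rho_def hex_centre_def by auto
qed

lemma VK_trans: "fst u mod 3 = 0 \<Longrightarrow> snd u mod 3 = 0 \<Longrightarrow> p + u \<in> VK \<longleftrightarrow> p \<in> VK"
  using hc_trans by (simp add: VK_def)
lemma VK_rho: "rho p \<in> VK \<longleftrightarrow> p \<in> VK"
  using hc_rho by (simp add: VK_def)

lemma FK_trans: assumes u: "fst u mod 3 = 0" "snd u mod 3 = 0" and F: "F \<in> FK"
  shows "(\<lambda>x. x + u) ` F \<in> FK"
proof -
  have sub: "(\<lambda>x. x + u) ` F \<subseteq> VK" using FK_sub[OF F] VK_trans[OF u] by auto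
  show ?thesis using F unfolding FK_def
  proof (elim UnE CollectE exE conjE)
    fix p assume "F = up_tri p"
    then have "(\<lambda>x. x + u) ` F = up_tri (p + u)" by (simp add: up_tri_def padd_eq algebra_simps)
    then have "(\<lambda>x. x + u) ` F \<in> {up_tri p |p. up_tri p \<subseteq> VK}" using sub by blast
    then show "(\<lambda>x. x + u) ` F \<in> {up_tri p |p. up_tri p \<subseteq> VK} \<union> {down_tri p |p. down_tri p \<subseteq> VK} \<union> {hexagon c |c. hex_centre c}" by blast
  next
    fix p assume "F = down_tri p"
    then have "(\<lambda>x. x + u) ` F = down_tri (p + u)" by (simp add: down_tri_def padd_eq algebra_simps)
    then have "(\<lambda>x. x + u) ` F \<in> {down_tri p |p. down_tri p \<subseteq> VK}" using sub by blast
    then show "(\<lambda>x. x + u) ` F \<in> {up_tri p |p. up_tri p \<subseteq> VK} \<union> {down_tri p |p. down_tri p \<subseteq> VK} \<union> {hexagon c |c. hex_centre c}" by blast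
  next
    fix c assume "F = hexagon c" "hex_centre c"
    moreover then have "(\<lambda>x. x + u) ` F = hexagon (c + u)"
      by (simp add: hexagon_def padd_eq image_image algebra_simps)
    ultimately have "(\<lambda>x. x + u) ` F \<in> {hexagon c |c. hex_centre c}" using hc_trans[OF u] by blast
    then show "(\<lambda>x. x + u) ` F \<in> {up_tri p |p. up_tri p \<subseteq> VK} \<union> {down_tri p |p. down_tri p \<subseteq> VK} \<union> {hexagon c |c. hex_centre c}" by blast
  qed
qed

lemma uminus_U: "uminus ` U = U"
  by (auto simp: unit_vecs_def)

lemma FK_rho: assumes F: "F \<in> FK" shows "rho ` F \<in> FK"
proof -
  have sub: "rho ` F \<subseteq> VK" using FK_sub[OF F] VK_rho by auto
  show ?thesis using F unfolding FK_def
  proof (elim UnE CollectE exE conjE)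
    fix p assume "F = up_tri p"
    then have "rho ` F = down_tri ((3,3) - p)"
      by (cases p) (simp only: up_tri_def down_tri_def padd_eq image_insert image_empty, auto simp: rho_def)
    then have "rho ` F \<in> {down_tri p |p. down_tri p \<subseteq> VK}" using sub by blast
    then show "rho ` F \<in> {up_tri p |p. up_tri p \<subseteq> VK} \<union> {down_tri p |p. down_tri p \<subseteq> VK} \<union> {hexagon c |c. hex_centre c}" by blast
  next
    fix p assume "F = down_tri p"
    then have "rho ` F = up_tri ((3,3) - p)"
      by (cases p) (simp only: up_tri_def down_tri_def padd_eq image_insert image_empty, auto simp: rho_def)
    then have "rho ` F \<in> {up_tri p |p. up_tri p \<subseteq> VK}" using sub by blast
    then show "rho ` F \<in> {up_tri p |p. up_tri p \<subseteq> VK} \<union> {down_tri p |p. down_tri p \<subseteq> VK} \<union> {hexagon c |c. hex_centre c}" by blast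
  next
    fix c assume c: "F = hexagon c" "hex_centre c"
    have "rho ` F = (\<lambda>w. rho c + w) ` (uminus ` U)"
      using c(1) by (simp add: hexagon_def padd_eq image_image rho_def algebra_simps)
    then have "rho ` F = hexagon (rho c)" by (simp add: uminus_U hexagon_def padd_eq)
    then have "rho ` F \<in> {hexagon c |c. hex_centre c}" using hc_rho c(2) by blast
    then show "rho ` F \<in> {up_tri p |p. up_tri p \<subseteq> VK} \<union> {down_tri p |p. down_tri p \<subseteq> VK} \<union> {hexagon c |c. hex_centre c}" by blast
  qed
qed


locale quot =
  fixes G :: "(pt \<Rightarrow> pt) set"
  assumes tq: "torus_quotient G"
begin

lemma GA: "g \<in> G \<Longrightarrow> g \<in> AutK" using tq by (auto simp: torus_quotient_def subgroup_AutK_def)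
lemma Ginv: "g \<in> G \<Longrightarrow> \<exists>h\<in>G. h \<circ> g = id" using tq by (auto simp: torus_quotient_def subgroup_AutK_def)

lemma vecs: "g \<in> G \<Longrightarrow> \<exists>w. fst w mod 3 = 0 \<and> snd w mod 3 = 0 \<and> (\<forall>v\<in>VK. g v = v + w)"
proof -
  assume g: "g \<in> G"
  have op: "orientation_preserving g" using tq g by (simp add: torus_quotient_def)
  have fr: "g \<noteq> id \<longrightarrow> (\<forall>v\<in>VK. g v \<noteq> v) \<and> (\<forall>e\<in>EK. g ` e \<noteq> e) \<and> (\<forall>F\<in>FK. g ` F \<noteq> F)"
    using tq g by (simp add: torus_quotient_def acts_freely_def)
  show ?thesis using classify[OF GA[OF g] op fr] .
qed

definition W0 :: "pt set" where "W0 = {w. \<exists>g\<in>G. \<forall>v\<in>VK. g v = v + w}"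

lemma s0VK: "((2,2)::pt) \<in> VK" using SV_VK SV_s0 by blast

lemma W0_mod: "w \<in> W0 \<Longrightarrow> fst w mod 3 = 0 \<and> snd w mod 3 = 0"
proof -
  assume "w \<in> W0"
  then obtain g where g: "g \<in> G" "\<forall>v\<in>VK. g v = v + w" by (auto simp: W0_def)
  from vecs[OF g(1)] obtain w' where w': "fst w' mod 3 = 0 \<and> snd w' mod 3 = 0" "\<forall>v\<in>VK. g v = v + w'" by metis
  have "(2,2) + w = (2,2) + w'" using g(2) w'(2) s0VK by metis
  then show ?thesis using w'(1) by simp
qed

lemma W0_neg: "w \<in> W0 \<Longrightarrow> - w \<in> W0"
proof -
  assume "w \<in> W0"
  then obtain g where g: "g \<in> G" "\<forall>v\<in>VK. g v = v + w" by (auto simp: W0_def)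
  obtain h where h: "h \<in> G" "h \<circ> g = id" using Ginv[OF g(1)] by blast
  from vecs[OF h(1)] obtain w' where w': "fst w' mod 3 = 0 \<and> snd w' mod 3 = 0" "\<forall>v\<in>VK. h v = v + w'" by metis
  have gs: "g (2,2) = (2,2) + w" using g(2) s0VK by blast
  have "g (2,2) \<in> VK" using autk_VK[OF GA[OF g(1)] s0VK] .
  then have "h (g (2,2)) = (2,2) + w + w'" using w'(2) gs by simp
  moreover have "h (g (2,2)) = (2,2)" using h(2) by (metis comp_apply id_apply)
  ultimately have "w' = - w" by (simp add: algebra_simps eq_neg_iff_add_eq_0)
  then show ?thesis using h(1) w'(2) by (auto simp: W0_def)
qed

lemma uminus_W0: "uminus ` W0 = W0"
proof
  show "uminus ` W0 \<subseteq> W0" using W0_neg by blast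
  show "W0 \<subseteq> uminus ` W0"
  proof
    fix w assume "w \<in> W0"
    then have "- w \<in> W0" by (rule W0_neg)
    then show "w \<in> uminus ` W0" by (metis image_eqI minus_minus)
  qed
qed

lemma E_eq: "v \<in> VK \<Longrightarrow> eta G v = (\<lambda>w. v + w) ` W0"
proof -
  assume v: "v \<in> VK"
  show ?thesis
  proof
    show "eta G v \<subseteq> (\<lambda>w. v + w) ` W0"
    proof
      fix x assume "x \<in> eta G v"
      then obtain g where g: "g \<in> G" "x = g v" by (auto simp: eta_def)
      obtain w where w: "\<forall>v\<in>VK. g v = v + w" using vecs[OF g(1)] by blast
      have "w \<in> W0" using g(1) w by (auto simp: W0_def)
      then show "x \<in> (\<lambda>w. v + w) ` W0" using g(2) w v by blast
    qed
    show "(\<lambda>w. v + w) ` W0 \<subseteq> eta G v"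
    proof
      fix x assume "x \<in> (\<lambda>w. v + w) ` W0"
      then obtain w g where xw: "x = v + w" and gG: "g \<in> G" and gw: "\<forall>v\<in>VK. g v = v + w"
        by (auto simp: W0_def)
      have "x = g v" using xw gw v by simp
      then show "x \<in> eta G v" unfolding eta_def using gG by blast
    qed
  qed
qed

definition good :: "(pt \<Rightarrow> pt) \<Rightarrow> bool" where
  "good f \<longleftrightarrow> (\<forall>v\<in>VK. f v \<in> VK) \<and> (\<forall>F\<in>FK. f ` F \<in> FK) \<and> (\<forall>v\<in>VK. f ` eta G v = eta G (f v))"

lemma good_vert: "good f \<Longrightarrow> X \<in> VertX G \<Longrightarrow> f ` X \<in> VertX G"
  unfolding good_def VertX_def by auto

lemma good_face: "good f \<Longrightarrow> A \<in> FaceX G \<Longrightarrow> (\<lambda>X. f ` X) ` A \<in> FaceX G"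
proof -
  assume f: "good f" and A: "A \<in> FaceX G"
  then obtain F where F: "F \<in> FK" "A = eta G ` F" by (auto simp: FaceX_def)
  have "(\<lambda>X. f ` X) ` A = (\<lambda>v. f ` eta G v) ` F" using F(2) by (simp add: image_image)
  also have "\<dots> = (\<lambda>v. eta G (f v)) ` F"
  proof (rule image_cong[OF refl])
    fix v assume "v \<in> F"
    then show "f ` eta G v = eta G (f v)" using f FK_sub[OF F(1)] unfolding good_def by blast
  qed
  also have "\<dots> = eta G ` (f ` F)" by (simp add: image_image)
  finally show ?thesis using f F(1) unfolding good_def FaceX_def by auto
qed

lemma autX_from: assumes f: "good f" and h: "good h" and i1: "\<forall>p. h (f p) = p" and i2: "\<forall>p. f (h p) = p"
  shows "(\<lambda>X. f ` X) \<in> AutX G"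
proof -
  have hf: "\<And>p. h (f p) = p" using i1 by blast
  have fh: "\<And>p. f (h p) = p" using i2 by blast
  have s1: "h ` (f ` X) = X" for X by (simp add: image_image hf)
  have s2: "f ` (h ` X) = X" for X by (simp add: image_image fh)
  have bij: "bij_betw (\<lambda>X. f ` X) (VertX G) (VertX G)"
    by (rule bij_betw_byWitness[where f'="\<lambda>X. h ` X"]) (use s1 s2 good_vert[OF f] good_vert[OF h] in auto)
  have fc: "A \<in> FaceX G \<longleftrightarrow> (\<lambda>X. f ` X) ` A \<in> FaceX G" for A
  proof
    assume "A \<in> FaceX G" then show "(\<lambda>X. f ` X) ` A \<in> FaceX G" using good_face[OF f] by blast
  next
    assume "(\<lambda>X. f ` X) ` A \<in> FaceX G"
    then have "(\<lambda>X. h ` X) ` ((\<lambda>X. f ` X) ` A) \<in> FaceX G" using good_face[OF h] by blast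
    moreover have "(\<lambda>X. h ` X) ` ((\<lambda>X. f ` X) ` A) = A" using s1 by (simp add: image_image)
    ultimately show "A \<in> FaceX G" by simp
  qed
  show ?thesis using bij fc by (simp add: AutX_def)
qed

lemma autX_comp: "a \<in> AutX G \<Longrightarrow> c \<in> AutX G \<Longrightarrow> a \<circ> c \<in> AutX G"
proof -
  assume a: "a \<in> AutX G" and c: "c \<in> AutX G"
  have ba: "bij_betw a (VertX G) (VertX G)" and bc: "bij_betw c (VertX G) (VertX G)"
    using a c by (auto simp: AutX_def)
  have "bij_betw (a \<circ> c) (VertX G) (VertX G)" using bij_betw_trans[OF bc ba] .
  moreover have "A \<in> FaceX G \<longleftrightarrow> (a \<circ> c) ` A \<in> FaceX G" if A: "A \<subseteq> VertX G" for A
  proof -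
    have cA: "c ` A \<subseteq> VertX G" using A bc by (meson bij_betwE image_subsetI subsetD)
    have "A \<in> FaceX G \<longleftrightarrow> c ` A \<in> FaceX G" using c A by (auto simp: AutX_def)
    also have "\<dots> \<longleftrightarrow> a ` (c ` A) \<in> FaceX G" using a cA by (auto simp: AutX_def)
    finally show ?thesis by (simp add: image_comp)
  qed
  ultimately show ?thesis by (simp add: AutX_def)
qed

definition orb :: "pt set \<Rightarrow> pt set set" where "orb x = (\<lambda>a. a x) ` AutX G"

lemma orb_eq: assumes M: "M \<in> AutX G" and M': "M' \<in> AutX G" and i: "\<forall>X. M' (M X) = X"
  shows "orb (M x) = orb x"
proof
  show "orb (M x) \<subseteq> orb x"
  proof
    fix y assume "y \<in> orb (M x)"
    then obtain a where a: "a \<in> AutX G" "y = a (M x)" by (auto simp: orb_def)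
    then have "y = (a \<circ> M) x" by simp
    then show "y \<in> orb x" using autX_comp[OF a(1) M] unfolding orb_def by (metis image_eqI)
  qed
  show "orb x \<subseteq> orb (M x)"
  proof
    fix y assume "y \<in> orb x"
    then obtain a where a: "a \<in> AutX G" "y = a x" by (auto simp: orb_def)
    then have "y = (a \<circ> M') (M x)" using i by simp
    then show "y \<in> orb (M x)" using autX_comp[OF a(1) M'] unfolding orb_def by (metis image_eqI)
  qed
qed

lemma good_trans: assumes u: "fst u mod 3 = 0" "snd u mod 3 = 0" shows "good (\<lambda>x. x + u)"
  unfolding good_def
proof (intro conjI ballI)
  fix v assume v: "v \<in> VK"
  show "v + u \<in> VK" using VK_trans[OF u] v by simp
  have vu: "v + u \<in> VK" using VK_trans[OF u] v by simp
  show "(\<lambda>x. x + u) ` eta G v = eta G (v + u)"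
    unfolding E_eq[OF v] E_eq[OF vu] by (simp add: image_image algebra_simps)
next
  fix F assume "F \<in> FK" then show "(\<lambda>x. x + u) ` F \<in> FK" using FK_trans[OF u] by blast
qed

lemma good_rho: "good rho"
  unfolding good_def
proof (intro conjI ballI)
  fix v assume v: "v \<in> VK"
  show "rho v \<in> VK" using VK_rho v by simp
  have vr: "rho v \<in> VK" using VK_rho v by simp
  have "rho ` eta G v = (\<lambda>w. rho v + w) ` (uminus ` W0)"
    unfolding E_eq[OF v] by (simp add: image_image rho_def algebra_simps)
  then show "rho ` eta G v = eta G (rho v)" unfolding E_eq[OF vr] uminus_W0 .
next
  fix F assume "F \<in> FK" then show "rho ` F \<in> FK" using FK_rho by blast
qed

lemma orbT: assumes v: "v \<in> VK" and u: "fst u mod 3 = 0" "snd u mod 3 = 0"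
  shows "orb (eta G (v + u)) = orb (eta G v)"
proof -
  have u': "fst (- u) mod 3 = 0" "snd (- u) mod 3 = 0" using u by (simp_all add: zmod_zminus1_eq_if)
  have g1: "good (\<lambda>x. x + u)" using good_trans[OF u] .
  have g2: "good (\<lambda>x. x + - u)" using good_trans[OF u'] .
  have M: "(\<lambda>X. (\<lambda>x. x + u) ` X) \<in> AutX G" by (rule autX_from[OF g1 g2]) auto
  have M': "(\<lambda>X. (\<lambda>x. x + - u) ` X) \<in> AutX G" by (rule autX_from[OF g2 g1]) auto
  have i: "\<forall>X. (\<lambda>x. x + - u) ` ((\<lambda>x. x + u) ` X) = X" by (simp add: image_image)
  have "(\<lambda>x. x + u) ` eta G v = eta G (v + u)" using g1 v unfolding good_def by blast
  then show ?thesis using orb_eq[OF M M' i, of "eta G v"] by simp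
qed

lemma orbR: assumes v: "v \<in> VK" shows "orb (eta G (rho v)) = orb (eta G v)"
proof -
  have M: "(\<lambda>X. rho ` X) \<in> AutX G" by (rule autX_from[OF good_rho good_rho]) auto
  have i: "\<forall>X. rho ` (rho ` X) = X" by (simp add: image_image)
  have "rho ` eta G v = eta G (rho v)" using good_rho v unfolding good_def by blast
  then show ?thesis using orb_eq[OF M M i, of "eta G v"] by simp
qed

lemma reps: assumes v: "v \<in> VK"
  shows "orb (eta G v) \<in> (\<lambda>r. orb (eta G r)) ` {(2,2),(1,0),(1,2),(2,1)}"
proof -
  define r :: pt where "r = (fst v mod 3, snd v mod 3)"
  define u :: pt where "u = v - r"
  have u: "fst u mod 3 = 0" "snd u mod 3 = 0" by (simp_all add: u_def r_def mod_diff_eq[symmetric])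
  have vr: "v = r + u" by (simp add: u_def)
  have rV: "r \<in> VK" using v VK_trans[OF u, of r] vr by simp
  have o1: "orb (eta G v) = orb (eta G r)" using orbT[OF rV u] vr by simp
  have T: "orb (eta G (p + (a, b))) = orb (eta G p)" if "p \<in> VK" "a mod 3 = 0" "b mod 3 = 0" for p a b
    using orbT[OF that(1), of "(a,b)"] that by simp
  have r1: "fst r \<in> {0,1,2}" "snd r \<in> {0,1,2}" by (auto simp: r_def)
  have nh: "\<not> hex_centre r" using rV by (simp add: VK_def)
  have V: "(0::int,1::int) \<in> VK" "(0::int,2::int) \<in> VK" "(2::int,0::int) \<in> VK" "(1::int,0::int) \<in> VK"
    "(1::int,2::int) \<in> VK" "(2::int,1::int) \<in> VK"
    by (simp_all add: VK_def hex_centre_def)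
  have c01: "orb (eta G (0,1)) = orb (eta G (1,0))"
  proof -
    have "orb (eta G (0,1)) = orb (eta G (rho (0,1)))" using orbR[OF V(1)] by simp
    also have "rho (0,1) = (1,0) + (3,3)" by (simp add: rho_def)
    finally show ?thesis using T[OF V(4), of 3 3] by simp
  qed
  have c02: "orb (eta G (0,2)) = orb (eta G (1,2))"
  proof -
    have "orb (eta G (0,2)) = orb (eta G (rho (0,2)))" using orbR[OF V(2)] by simp
    also have "rho (0,2) = (1,2) + (3,0)" by (simp add: rho_def)
    finally show ?thesis using T[OF V(5), of 3 0] by simp
  qed
  have c20: "orb (eta G (2,0)) = orb (eta G (2,1))"
  proof -
    have "orb (eta G (2,0)) = orb (eta G (rho (2,0)))" using orbR[OF V(3)] by simp
    also have "rho (2,0) = (2,1) + (0,3)" by (simp add: rho_def)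
    finally show ?thesis using T[OF V(6), of 0 3] by simp
  qed
  obtain r1 r2 where rr: "r = (r1, r2)" by (cases r)
  show ?thesis using r1 nh o1 c01 c02 c20 unfolding rr by (auto simp: hex_centre_def)
qed

lemma orbits_bound: "card (AutX_orbits G) \<le> 4"
proof -
  have eq: "AutX_orbits G = orb ` VertX G" by (auto simp: AutX_orbits_def orb_def)
  have sub: "AutX_orbits G \<subseteq> (\<lambda>r. orb (eta G r)) ` {(2,2),(1,0),(1,2),(2,1)}"
    unfolding eq VertX_def using reps by auto
  have "card (AutX_orbits G) \<le> card ((\<lambda>r. orb (eta G r)) ` {(2::int,2::int),(1,0),(1,2),(2,1)})"
    by (rule card_mono[OF _ sub]) simp
  also have "\<dots> \<le> card {(2::int,2::int),(1,0),(1,2),(2,1)}" by (rule card_image_le) simp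
  also have "\<dots> = 4" by simp
  finally show ?thesis .
qed

end

theorem theorem1:
  fixes \<Gamma> :: "(pt \<Rightarrow> pt) set"
  assumes "torus_quotient \<Gamma>"
      and "polyhedral_quotient \<Gamma>"
  shows "card (AutX_orbits \<Gamma>) \<le> 4"
proof -
  interpret quot \<Gamma> using assms(1) by unfold_locales
  show ?thesis by (rule orbits_bound)
qed

end
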